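(* Let $F:\mathbb{R}^p\to\mathbb{R}^p$ be single-valued and $T:\mathbb{R}^p\rightrightarrows\mathbb{R}^p$ (not necessarily monotone), $\Phi:=F+T$, $\eta>0$, $\beta>0$, and assume $\mathrm{ran}\,J_{\eta T}\subseteq\mathrm{dom}\,F=\mathbb{R}^p$ and $\mathrm{dom}\,J_{\eta T}=\mathbb{R}^p$, with the resolvents single-valued. Let $\kappa_1,\kappa_2\ge0$ and let $\{(x^k,y^k)\}$ be generated by the scheme (GFBFS2): start from $x^0\in\mathrm{dom}\,\Phi$, set $x^{-1}=y^{-1}:=x^0$, and for $k\ge0$ $$y^k:=J_{\frac{\eta}{\beta}T}\big(x^k-\tfrac{\eta}{\beta}u^k\big),\qquad x^{k+1}:=\beta y^k+(1-\beta)x^k-\eta(Fy^k-u^k),$$ for some $u^k\in\mathbb{R}^p$, and set $\zeta^k:=\frac{\beta}{\eta}(x^k-y^k)-u^k\in Ty^k$. Then for any $\gamma>0$, any $x^\star\in\mathrm{zer}\,\Phi$ and any $k\ge0$, $$\begin{aligned}\|x^{k+1}-x^\star\|^2\le{}&\|x^k-x^\star\|^2-\beta\|x^k-y^k\|^2+\tfrac{\eta^2}{\gamma}\|Fy^k-u^k\|^2-(\beta-\gamma)\|x^{k+1}-y^k\|^2\\&-2\eta\langle Fy^k+\zeta^k,y^k-x^\star\rangle-(1-\beta)\|x^{k+1}-x^k\|^2.\end{aligned}$$ Moreover, assume in addition that $F$ is $L$-Lipschitz continuous, that $u^k$ satisfies $\|Fx^k-u^k\|^2\le\kappa_1\|Fx^k-Fy^{k-1}\|^2+\kappa_2\|Fx^k-Fx^{k-1}\|^2$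 for all $k\ge0$, and that there exist $x^\star\in\mathrm{zer}\,\Phi$ and $\rho\ge0$ with $\langle w,x-x^\star\rangle\ge-\rho\|w\|^2$ for all $(x,w)\in\mathrm{gra}\,\Phi$. For $r>0$ and $\gamma>0$ define $$\mathcal{P}_k:=\|x^k-x^\star\|^2+\tfrac{\kappa_1(1+r)L^2\eta^2}{r\gamma}\|x^k-y^{k-1}\|^2+\tfrac{\kappa_2(1+r)L^2\eta^2}{r\gamma}\|x^k-x^{k-1}\|^2.$$ Then for any $s>0$, $\mu\in[0,1]$ and $k\ge0$, $$\begin{aligned}\mathcal{P}_{k+1}\le{}&\mathcal{P}_k-\Big(\beta-\tfrac{(1+r)L^2\eta^2}{\gamma}-\tfrac{2\mu\rho(1+s)}{s\eta}\Big)\|y^k-x^k\|^2\\&-\Big(\beta-\gamma-\tfrac{\kappa_1(1+r)L^2\eta^2}{r\gamma}-\tfrac{2\mu\rho(1+s)}{\eta}\Big)\|x^{k+1}-y^k\|^2\\&-\Big(1-\beta-\tfrac{\kappa_2(1+r)L^2\eta^2}{r\gamma}-\tfrac{2(1-\mu)\rho}{\eta}\Big)\|x^{k+1}-x^k\|^2.\end{aligned}$$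
   Context: $\mathrm{zer}\,\Phi:=\{x:0\in Fx+Tx\}$, $\mathrm{gra}\,\Phi:=\{(x,w):w\in\Phi x\}$. $J_{\lambda T}:=(\mathbb{I}+\lambda T)^{-1}$ is the resolvent of $\lambda T$; $\mathrm{ran}$ and $\mathrm{dom}$ denote range and domain. $F$ is $L$-Lipschitz if $\|Fx-Fy\|\le L\|x-y\|$. *)

theory Defs
  imports "HOL-Analysis.Analysis"
begin

definition resolvent :: "real \<Rightarrow> ('a::real_vector \<Rightarrow> 'a set) \<Rightarrow> 'a \<Rightarrow> 'a set" where
  "resolvent lam T x = {z. \<exists>w\<in>T z. x = z + lam *\<^sub>R w}"
  \<comment> \<open>J_{lam T} = (I + lam T)^{-1}\<close>

definition op_dom :: "('a \<Rightarrow> 'b set) \<Rightarrow> 'a set" where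
  "op_dom A = {x. A x \<noteq> {}}"

definition op_ran :: "('a \<Rightarrow> 'b set) \<Rightarrow> 'b set" where
  "op_ran A = (\<Union>x. A x)"

definition single_valued_op :: "('a \<Rightarrow> 'b set) \<Rightarrow> bool" where
  "single_valued_op A \<longleftrightarrow> (\<forall>x. \<forall>y\<in>A x. \<forall>z\<in>A x. y = z)"

definition sum_op :: "('a \<Rightarrow> 'a::real_vector) \<Rightarrow> ('a \<Rightarrow> 'a set) \<Rightarrow> 'a \<Rightarrow> 'a set" where
  "sum_op F T x = {F x + t | t. t \<in> T x}"

definition zer :: "('a \<Rightarrow> 'a::real_vector set) \<Rightarrow> 'a set" where
  "zer Phi = {x. 0 \<in> Phi x}"

definition gra :: "('a \<Rightarrow> 'b set) \<Rightarrow> ('a \<times> 'b) set" where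
  "gra A = {(x, w). w \<in> A x}"

end

theory Submission
  imports Defs
begin

lemma part2_core:
  fixes a b d :: "'a::real_inner" and beta eta gamma :: real
  assumes g: "gamma > 0" and False: "eta \<noteq> 0"
  shows "(norm (a + beta *\<^sub>R b - eta *\<^sub>R d))\<^sup>2 \<le> (norm a)\<^sup>2 - beta * (norm b)\<^sup>2
    + eta\<^sup>2 / gamma * (norm d)\<^sup>2 - (beta - gamma) * (norm ((beta - 1) *\<^sub>R b - eta *\<^sub>R d))\<^sup>2
    - 2 * eta * ((d - (beta/eta) *\<^sub>R b) \<bullet> (a + b))
    - (1 - beta) * (norm (beta *\<^sub>R b - eta *\<^sub>R d))\<^sup>2"
proof -

  have K: "0 \<le> (norm ((gamma * (1-beta)) *\<^sub>R b - (eta * (1 - gamma)) *\<^sub>R d))\<^sup>2 / gamma" using g by simp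
  have "(norm a)\<^sup>2 - beta * (norm b)\<^sup>2
    + eta\<^sup>2 / gamma * (norm d)\<^sup>2 - (beta - gamma) * (norm ((beta - 1) *\<^sub>R b - eta *\<^sub>R d))\<^sup>2
    - 2 * eta * ((d - (beta/eta) *\<^sub>R b) \<bullet> (a + b))
    - (1 - beta) * (norm (beta *\<^sub>R b - eta *\<^sub>R d))\<^sup>2 - (norm (a + beta *\<^sub>R b - eta *\<^sub>R d))\<^sup>2
    = (norm ((gamma * (1-beta)) *\<^sub>R b - (eta * (1 - gamma)) *\<^sub>R d))\<^sup>2 / gamma"
    using g False
    by (simp add: power2_norm_eq_inner inner_simps inner_commute[of b a] inner_commute[of d a] inner_commute[of d b]
        field_simps) (simp add: algebra_simps power2_eq_square)
  then show ?thesis using K by linarith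
qed

lemma young:
  fixes p q :: "'a::real_inner" and r :: real
  assumes r: "r > 0"
  shows "(norm (p + q))\<^sup>2 \<le> (1 + r) * (norm p)\<^sup>2 + (1 + r) / r * (norm q)\<^sup>2"
proof -
  have K: "0 \<le> (norm (r *\<^sub>R p - q))\<^sup>2" by simp
  have "r * ((1 + r) * (norm p)\<^sup>2 + (1 + r) / r * (norm q)\<^sup>2) - r * (norm (p + q))\<^sup>2 = (norm (r *\<^sub>R p - q))\<^sup>2"
    using r by (simp add: power2_norm_eq_inner inner_simps inner_commute[of q p] field_simps)
  then have "r * (norm (p + q))\<^sup>2 \<le> r * ((1 + r) * (norm p)\<^sup>2 + (1 + r) / r * (norm q)\<^sup>2)" using K by linarith
  then show ?thesis using r by simp
qed


lemma combine:
  fixes P1 A B C D N X Y eta gamma rho r s mu L kappa1 kappa2 beta :: real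
  assumes eta: "eta > 0" and g: "gamma > 0" and rho: "rho \<ge> 0" and r: "r > 0" and s: "s > 0"
    and mu0: "0 \<le> mu" and mu1: "mu \<le> 1"
    and h1: "P1 \<le> A - beta * B + eta\<^sup>2 / gamma * N - (beta - gamma) * C + 2 * rho / eta * D - (1 - beta) * D"
    and h2: "N \<le> (1+r) * L\<^sup>2 * B + (1+r)/r * (kappa1 * (L\<^sup>2 * Y) + kappa2 * (L\<^sup>2 * X))"
    and h3: "D \<le> (1+s) * C + (1+s)/s * B"
  shows "P1 + kappa1 * (1 + r) * L\<^sup>2 * eta\<^sup>2 / (r * gamma) * C + kappa2 * (1 + r) * L\<^sup>2 * eta\<^sup>2 / (r * gamma) * D
     \<le> A + kappa1 * (1 + r) * L\<^sup>2 * eta\<^sup>2 / (r * gamma) * Y + kappa2 * (1 + r) * L\<^sup>2 * eta\<^sup>2 / (r * gamma) * X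
                - (beta - (1 + r) * L\<^sup>2 * eta\<^sup>2 / gamma - 2 * mu * rho * (1 + s) / (s * eta)) * B
                - (beta - gamma - kappa1 * (1 + r) * L\<^sup>2 * eta\<^sup>2 / (r * gamma)
                    - 2 * mu * rho * (1 + s) / eta) * C
                - (1 - beta - kappa2 * (1 + r) * L\<^sup>2 * eta\<^sup>2 / (r * gamma)
                    - 2 * (1 - mu) * rho / eta) * D"
proof -
  have e: "eta\<^sup>2 / gamma \<ge> 0" using g by simp
  have h2': "eta\<^sup>2 / gamma * N \<le> eta\<^sup>2 / gamma * ((1+r) * L\<^sup>2 * B + (1+r)/r * (kappa1 * (L\<^sup>2 * Y) + kappa2 * (L\<^sup>2 * X)))"
    using mult_left_mono[OF h2 e] .
  have q: "mu * (2 * rho / eta) \<ge> 0" using mu0 rho eta by simp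
  have h3': "mu * (2 * rho / eta) * D \<le> mu * (2 * rho / eta) * ((1+s) * C + (1+s)/s * B)"
    using mult_left_mono[OF h3 q] .
  have split: "2 * rho / eta * D = mu * (2 * rho / eta) * D + 2 * (1 - mu) * rho / eta * D"
    by (simp add: algebra_simps add_divide_distrib[symmetric])
  have "eta\<^sup>2 / gamma * ((1+r) * L\<^sup>2 * B + (1+r)/r * (kappa1 * (L\<^sup>2 * Y) + kappa2 * (L\<^sup>2 * X)))
     = (1 + r) * L\<^sup>2 * eta\<^sup>2 / gamma * B + kappa1 * (1 + r) * L\<^sup>2 * eta\<^sup>2 / (r * gamma) * Y
       + kappa2 * (1 + r) * L\<^sup>2 * eta\<^sup>2 / (r * gamma) * X"
    using r g by (simp add: field_simps)
  moreover have "mu * (2 * rho / eta) * ((1+s) * C + (1+s)/s * B)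
     = 2 * mu * rho * (1 + s) / eta * C + 2 * mu * rho * (1 + s) / (s * eta) * B"
    using s eta by (simp add: field_simps)
  ultimately show ?thesis using h1 h2' h3' split by (simp add: algebra_simps)
qed

theorem lemma6:
  fixes F :: "'a::euclidean_space \<Rightarrow> 'a"
    and T :: "'a \<Rightarrow> 'a set"
    and x y u :: "int \<Rightarrow> 'a"
    and eta beta kappa1 kappa2 :: real
  assumes eta_pos: "eta > 0" and beta_pos: "beta > 0"
    and ranJ: "op_ran (resolvent eta T) \<subseteq> UNIV"
    and domJ: "op_dom (resolvent eta T) = UNIV"
    and sv1: "single_valued_op (resolvent eta T)"
    and sv2: "single_valued_op (resolvent (eta / beta) T)"
    and k1: "kappa1 \<ge> 0" and k2: "kappa2 \<ge> 0"
    and x0: "x 0 \<in> op_dom (sum_op F T)"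
    and xm1: "x (-1) = x 0" and ym1: "y (-1) = x 0"
    and ystep: "\<And>k. k \<ge> 0 \<Longrightarrow> y k \<in> resolvent (eta / beta) T (x k - (eta / beta) *\<^sub>R u k)"
    and xstep: "\<And>k. k \<ge> 0 \<Longrightarrow>
        x (k + 1) = beta *\<^sub>R y k + (1 - beta) *\<^sub>R x k - eta *\<^sub>R (F (y k) - u k)"
  shows
   "(\<forall>k\<ge>0. (beta / eta) *\<^sub>R (x k - y k) - u k \<in> T (y k))
    \<and> (\<forall>gamma>0. \<forall>xs\<in>zer (sum_op F T). \<forall>k\<ge>0.
        (norm (x (k + 1) - xs))\<^sup>2 \<le> (norm (x k - xs))\<^sup>2 - beta * (norm (x k - y k))\<^sup>2
          + eta\<^sup>2 / gamma * (norm (F (y k) - u k))\<^sup>2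
          - (beta - gamma) * (norm (x (k + 1) - y k))\<^sup>2
          - 2 * eta * ((F (y k) + ((beta / eta) *\<^sub>R (x k - y k) - u k)) \<bullet> (y k - xs))
          - (1 - beta) * (norm (x (k + 1) - x k))\<^sup>2)
    \<and> (\<forall>L xs rho.
        L-lipschitz_on UNIV F
        \<and> (\<forall>k\<ge>0. (norm (F (x k) - u k))\<^sup>2
              \<le> kappa1 * (norm (F (x k) - F (y (k - 1))))\<^sup>2
                + kappa2 * (norm (F (x k) - F (x (k - 1))))\<^sup>2)
        \<and> xs \<in> zer (sum_op F T) \<and> rho \<ge> 0
        \<and> (\<forall>(z, w)\<in>gra (sum_op F T). w \<bullet> (z - xs) \<ge> - rho * (norm w)\<^sup>2)
      \<longrightarrow> (\<forall>r>0. \<forall>gamma>0. \<forall>s>0. \<forall>mu. 0 \<le> mu \<and> mu \<le> 1 \<longrightarrow> (\<forall>k\<ge>0.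
            (let P = (\<lambda>j. (norm (x j - xs))\<^sup>2
                   + kappa1 * (1 + r) * L\<^sup>2 * eta\<^sup>2 / (r * gamma) * (norm (x j - y (j - 1)))\<^sup>2
                   + kappa2 * (1 + r) * L\<^sup>2 * eta\<^sup>2 / (r * gamma) * (norm (x j - x (j - 1)))\<^sup>2)
             in P (k + 1) \<le> P k
                - (beta - (1 + r) * L\<^sup>2 * eta\<^sup>2 / gamma - 2 * mu * rho * (1 + s) / (s * eta))
                    * (norm (y k - x k))\<^sup>2
                - (beta - gamma - kappa1 * (1 + r) * L\<^sup>2 * eta\<^sup>2 / (r * gamma)
                    - 2 * mu * rho * (1 + s) / eta) * (norm (x (k + 1) - y k))\<^sup>2
                - (1 - beta - kappa2 * (1 + r) * L\<^sup>2 * eta\<^sup>2 / (r * gamma)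
                    - 2 * (1 - mu) * rho / eta) * (norm (x (k + 1) - x k))\<^sup>2))))"
  proof -
  have zeta: "(beta / eta) *\<^sub>R (x k - y k) - u k \<in> T (y k)" if "k \<ge> 0" for k
  proof -
    from ystep[OF that] obtain w where w: "w \<in> T (y k)"
      and eq: "x k - (eta / beta) *\<^sub>R u k = y k + (eta / beta) *\<^sub>R w"
      unfolding resolvent_def by blast
    have "(beta / eta) *\<^sub>R (x k - (eta / beta) *\<^sub>R u k) = (beta / eta) *\<^sub>R (y k + (eta / beta) *\<^sub>R w)"
      using eq by simp
    then have "(beta / eta) *\<^sub>R x k - u k = (beta / eta) *\<^sub>R y k + w"
      using eta_pos beta_pos by (simp add: scaleR_diff_right scaleR_add_right)
    then have "w = (beta / eta) *\<^sub>R (x k - y k) - u k"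
      by (simp add: scaleR_diff_right algebra_simps)
    then show ?thesis using w by simp
  qed
  have P2: "(norm (x (k + 1) - xs))\<^sup>2 \<le> (norm (x k - xs))\<^sup>2 - beta * (norm (x k - y k))\<^sup>2
          + eta\<^sup>2 / gamma * (norm (F (y k) - u k))\<^sup>2
          - (beta - gamma) * (norm (x (k + 1) - y k))\<^sup>2
          - 2 * eta * ((F (y k) + ((beta / eta) *\<^sub>R (x k - y k) - u k)) \<bullet> (y k - xs))
          - (1 - beta) * (norm (x (k + 1) - x k))\<^sup>2"
    if g: "gamma > 0" and k: "k \<ge> 0" for gamma xs k
  proof -
    define a where "a = x k - xs"
    define b where "b = y k - x k"
    define d where "d = F (y k) - u k"
    have X: "x (k + 1) = beta *\<^sub>R y k + (1 - beta) *\<^sub>R x k - eta *\<^sub>R d"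
      using xstep[OF k] d_def by simp
    have e1: "x (k + 1) - xs = a + beta *\<^sub>R b - eta *\<^sub>R d"
      unfolding X a_def b_def by (simp add: algebra_simps)
    have e2: "x (k + 1) - y k = (beta - 1) *\<^sub>R b - eta *\<^sub>R d"
      unfolding X b_def by (simp add: algebra_simps)
    have e3: "x (k + 1) - x k = beta *\<^sub>R b - eta *\<^sub>R d"
      unfolding X b_def by (simp add: algebra_simps)
    have e4: "norm (x k - y k) = norm b"
      unfolding b_def by (simp add: norm_minus_commute)
    have e5: "F (y k) + ((beta / eta) *\<^sub>R (x k - y k) - u k) = d - (beta / eta) *\<^sub>R b"
      unfolding b_def d_def by (simp add: algebra_simps)
    have e6: "y k - xs = a + b" unfolding a_def b_def by simp
    show ?thesis unfolding e1 e2 e3 e4 e5 e6 a_def[symmetric] d_def[symmetric]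
      using part2_core[OF g, of eta a beta b d] eta_pos by simp
  qed
  show ?thesis
  proof (intro conjI allI impI ballI)
    fix k :: int assume "k \<ge> 0" then show "(beta / eta) *\<^sub>R (x k - y k) - u k \<in> T (y k)" by (rule zeta)
  next
    fix gamma :: real and xs k assume "gamma > 0" "k \<ge> (0::int)"
    then show "(norm (x (k + 1) - xs))\<^sup>2 \<le> (norm (x k - xs))\<^sup>2 - beta * (norm (x k - y k))\<^sup>2
          + eta\<^sup>2 / gamma * (norm (F (y k) - u k))\<^sup>2
          - (beta - gamma) * (norm (x (k + 1) - y k))\<^sup>2
          - 2 * eta * ((F (y k) + ((beta / eta) *\<^sub>R (x k - y k) - u k)) \<bullet> (y k - xs))
          - (1 - beta) * (norm (x (k + 1) - x k))\<^sup>2" by (rule P2)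
  next
    fix L xs rho
    assume H: "L-lipschitz_on UNIV F
        \<and> (\<forall>k\<ge>0. (norm (F (x k) - u k))\<^sup>2
              \<le> kappa1 * (norm (F (x k) - F (y (k - 1))))\<^sup>2
                + kappa2 * (norm (F (x k) - F (x (k - 1))))\<^sup>2)
        \<and> xs \<in> zer (sum_op F T) \<and> rho \<ge> 0
        \<and> (\<forall>(z, w)\<in>gra (sum_op F T). w \<bullet> (z - xs) \<ge> - rho * (norm w)\<^sup>2)"
    then have lip: "L-lipschitz_on UNIV F"
      and uk: "\<And>k. k \<ge> 0 \<Longrightarrow> (norm (F (x k) - u k))\<^sup>2
              \<le> kappa1 * (norm (F (x k) - F (y (k - 1))))\<^sup>2
                + kappa2 * (norm (F (x k) - F (x (k - 1))))\<^sup>2"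
      and rho: "rho \<ge> 0"
      and mono: "\<And>z w. (z, w) \<in> gra (sum_op F T) \<Longrightarrow> w \<bullet> (z - xs) \<ge> - rho * (norm w)\<^sup>2"
      by auto
    have L0: "L \<ge> 0" using lip lipschitz_on_nonneg by blast
    have lipsq: "(norm (F p - F q))\<^sup>2 \<le> L\<^sup>2 * (norm (p - q))\<^sup>2" for p q
    proof -
      have "norm (F p - F q) \<le> L * norm (p - q)"
        using lipschitz_onD[OF lip, of p q] by (simp add: dist_norm)
      then have "(norm (F p - F q))\<^sup>2 \<le> (L * norm (p - q))\<^sup>2"
        by (rule power_mono) simp
      then show ?thesis by (simp add: power_mult_distrib)
    qed
      fix r gamma s mu :: real and k :: int
      assume r: "r > 0" and g: "gamma > 0" and s: "s > 0" and mu: "0 \<le> mu \<and> mu \<le> 1" and k: "k \<ge> 0"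
      define w where "w = F (y k) + ((beta / eta) *\<^sub>R (x k - y k) - u k)"
      have wg: "(y k, w) \<in> gra (sum_op F T)"
        using zeta[OF k] unfolding w_def gra_def sum_op_def by auto
      have X: "x (k + 1) = beta *\<^sub>R y k + (1 - beta) *\<^sub>R x k - eta *\<^sub>R (F (y k) - u k)"
        using xstep[OF k] by simp
      have ew: "eta *\<^sub>R w = x k - x (k + 1)"
        unfolding w_def X using eta_pos by (simp add: algebra_simps)
      have nw: "(norm w)\<^sup>2 = (norm (x (k + 1) - x k))\<^sup>2 / eta\<^sup>2"
      proof -
        have "norm (eta *\<^sub>R w) = norm (x (k + 1) - x k)" using ew by (simp add: norm_minus_commute)
        then have "eta * norm w = norm (x (k + 1) - x k)" using eta_pos by simp
        then show ?thesis using eta_pos by (simp add: field_simps power_mult_distrib[symmetric])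
      qed
      have I: "- 2 * eta * (w \<bullet> (y k - xs)) \<le> 2 * rho / eta * (norm (x (k + 1) - x k))\<^sup>2"
      proof -
        have "w \<bullet> (y k - xs) \<ge> - rho * (norm w)\<^sup>2" using mono[OF wg] .
        then have "eta * (- rho * (norm w)\<^sup>2) \<le> eta * (w \<bullet> (y k - xs))"
          using eta_pos by (intro mult_left_mono) auto
        then have "- 2 * eta * (w \<bullet> (y k - xs)) \<le> 2 * eta * (rho * (norm w)\<^sup>2)"
          by (simp add: algebra_simps)
        also have "\<dots> = 2 * rho / eta * (norm (x (k + 1) - x k))\<^sup>2"
          unfolding nw using eta_pos by (simp add: field_simps power2_eq_square)
        finally show ?thesis .
      qed
      have h1: "(norm (x (k + 1) - xs))\<^sup>2 \<le> (norm (x k - xs))\<^sup>2 - beta * (norm (y k - x k))\<^sup>2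
          + eta\<^sup>2 / gamma * (norm (F (y k) - u k))\<^sup>2
          - (beta - gamma) * (norm (x (k + 1) - y k))\<^sup>2
          + 2 * rho / eta * (norm (x (k + 1) - x k))\<^sup>2
          - (1 - beta) * (norm (x (k + 1) - x k))\<^sup>2"
        using P2[OF g k, of xs] I unfolding w_def by (simp add: norm_minus_commute)
      have h2: "(norm (F (y k) - u k))\<^sup>2 \<le> (1+r) * L\<^sup>2 * (norm (y k - x k))\<^sup>2
          + (1+r)/r * (kappa1 * (L\<^sup>2 * (norm (x k - y (k - 1)))\<^sup>2) + kappa2 * (L\<^sup>2 * (norm (x k - x (k - 1)))\<^sup>2))"
      proof -
        have "(norm (F (y k) - u k))\<^sup>2 \<le> (1 + r) * (norm (F (y k) - F (x k)))\<^sup>2 + (1 + r) / r * (norm (F (x k) - u k))\<^sup>2"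
          using young[OF r, of "F (y k) - F (x k)" "F (x k) - u k"] by simp
        also have "\<dots> \<le> (1+r) * (L\<^sup>2 * (norm (y k - x k))\<^sup>2)
          + (1+r)/r * (kappa1 * (L\<^sup>2 * (norm (x k - y (k - 1)))\<^sup>2) + kappa2 * (L\<^sup>2 * (norm (x k - x (k - 1)))\<^sup>2))"
        proof (rule add_mono)
          show "(1 + r) * (norm (F (y k) - F (x k)))\<^sup>2 \<le> (1+r) * (L\<^sup>2 * (norm (y k - x k))\<^sup>2)"
            using lipsq r by (intro mult_left_mono) auto
          have "(norm (F (x k) - u k))\<^sup>2 \<le> kappa1 * (L\<^sup>2 * (norm (x k - y (k - 1)))\<^sup>2) + kappa2 * (L\<^sup>2 * (norm (x k - x (k - 1)))\<^sup>2)"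
            using uk[OF k] mult_left_mono[OF lipsq k1] mult_left_mono[OF lipsq k2] by smt
          then show "(1 + r) / r * (norm (F (x k) - u k))\<^sup>2 \<le> (1+r)/r * (kappa1 * (L\<^sup>2 * (norm (x k - y (k - 1)))\<^sup>2) + kappa2 * (L\<^sup>2 * (norm (x k - x (k - 1)))\<^sup>2))"
            using r by (intro mult_left_mono) auto
        qed
        finally show ?thesis by (simp add: algebra_simps)
      qed
      have h3: "(norm (x (k + 1) - x k))\<^sup>2 \<le> (1+s) * (norm (x (k + 1) - y k))\<^sup>2 + (1+s)/s * (norm (y k - x k))\<^sup>2"
        using young[OF s, of "x (k + 1) - y k" "y k - x k"] by simp
      have "(norm (x (k + 1) - xs))\<^sup>2 + kappa1 * (1 + r) * L\<^sup>2 * eta\<^sup>2 / (r * gamma) * (norm (x (k + 1) - y k))\<^sup>2 + kappa2 * (1 + r) * L\<^sup>2 * eta\<^sup>2 / (r * gamma) * (norm (x (k + 1) - x k))\<^sup>2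
     \<le> (norm (x k - xs))\<^sup>2 + kappa1 * (1 + r) * L\<^sup>2 * eta\<^sup>2 / (r * gamma) * (norm (x k - y (k - 1)))\<^sup>2 + kappa2 * (1 + r) * L\<^sup>2 * eta\<^sup>2 / (r * gamma) * (norm (x k - x (k - 1)))\<^sup>2
                - (beta - (1 + r) * L\<^sup>2 * eta\<^sup>2 / gamma - 2 * mu * rho * (1 + s) / (s * eta)) * (norm (y k - x k))\<^sup>2
                - (beta - gamma - kappa1 * (1 + r) * L\<^sup>2 * eta\<^sup>2 / (r * gamma)
                    - 2 * mu * rho * (1 + s) / eta) * (norm (x (k + 1) - y k))\<^sup>2
                - (1 - beta - kappa2 * (1 + r) * L\<^sup>2 * eta\<^sup>2 / (r * gamma)
                    - 2 * (1 - mu) * rho / eta) * (norm (x (k + 1) - x k))\<^sup>2"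
        by (rule combine[OF eta_pos g rho r s conjunct1[OF mu] conjunct2[OF mu] h1 h2 h3])
      then show "let P = (\<lambda>j. (norm (x j - xs))\<^sup>2
                   + kappa1 * (1 + r) * L\<^sup>2 * eta\<^sup>2 / (r * gamma) * (norm (x j - y (j - 1)))\<^sup>2
                   + kappa2 * (1 + r) * L\<^sup>2 * eta\<^sup>2 / (r * gamma) * (norm (x j - x (j - 1)))\<^sup>2)
             in P (k + 1) \<le> P k
                - (beta - (1 + r) * L\<^sup>2 * eta\<^sup>2 / gamma - 2 * mu * rho * (1 + s) / (s * eta))
                    * (norm (y k - x k))\<^sup>2
                - (beta - gamma - kappa1 * (1 + r) * L\<^sup>2 * eta\<^sup>2 / (r * gamma)
                    - 2 * mu * rho * (1 + s) / eta) * (norm (x (k + 1) - y k))\<^sup>2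
                - (1 - beta - kappa2 * (1 + r) * L\<^sup>2 * eta\<^sup>2 / (r * gamma)
                    - 2 * (1 - mu) * rho / eta) * (norm (x (k + 1) - x k))\<^sup>2"
        unfolding Let_def by simp
  qed
qed

end
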